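(* Let $S\neq\mathcal{C}$ be a $\mathcal{C}$-semigroup. Then $S$ is $\mathcal{C}$-irreducible if and only if $\#\max_{\le_S}\mathrm{FG}(S)=1$.
   Context: An integer cone $\mathcal{C}\subseteq\mathbb{N}^p$ is the set of integer points of a finitely generated rational cone in $\mathbb{Q}_{\ge0}^p$. A $\mathcal{C}$-semigroup is a subset $S\subseteq\mathcal{C}$ containing $0$, closed under addition, with $\mathcal{C}\setminus S$ finite; $\mathcal{H}(S)=\mathcal{C}\setminus S$. A monomial order $\preceq$ on $\mathbb{N}^p$ is fixed (total order, compatible with addition, $\mathbf 0\preceq\mathbf c$ for all $\mathbf c$); $F(S)=\max_\preceq\mathcal{H}(S)$. $\mathrm{PF}(S)=\{\mathbf x\in\mathcal{H}(S)\mid\mathbf x+(S\setminus\{0\})\subseteq S\}$; $S$ is $\mathcal{C}$-irreducible if $\mathrm{PF}(S)=\{F(S)\}$ or $\mathrm{PF}(S)=\{F(S),F(S)/2\}$. $\mathbf x\le_S\mathbf y$ means $\mathbf y-\mathbf x\in S$; $\mathrm{FG}(S)=\{\mathbf x\in\mathcal{H}(S)\mid 2\mathbf x\in S,\ 3\mathbf x\in S\}$, and $\max_{\le_S}$ denotes the set of maximal elements with respect to $\le_S$. *)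

theory Defs
  imports Complex_Main "HOL-Library.Function_Algebras"
begin

text \<open>Elements of N^p are functions 'n \<Rightarrow> nat with 'n a finite index type (p = CARD('n)),
  with pointwise addition and zero.\<close>

definition integer_cone :: "('n::finite \<Rightarrow> nat) set \<Rightarrow> bool" where
  "integer_cone C \<longleftrightarrow>
     (\<exists>G :: ('n \<Rightarrow> rat) set. finite G \<and> (\<forall>g\<in>G. \<forall>i. g i \<ge> 0) \<and>
        C = {x. \<exists>l :: ('n \<Rightarrow> rat) \<Rightarrow> rat. (\<forall>g\<in>G. l g \<ge> 0) \<and>
                  (\<forall>i. of_nat (x i) = (\<Sum>g\<in>G. l g * g i))})"

definition monomial_order :: "(('n \<Rightarrow> nat) \<Rightarrow> ('n \<Rightarrow> nat) \<Rightarrow> bool) \<Rightarrow> bool" where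
  "monomial_order ord \<longleftrightarrow>
     (\<forall>a. ord a a) \<and> (\<forall>a b. ord a b \<and> ord b a \<longrightarrow> a = b) \<and>
     (\<forall>a b c. ord a b \<and> ord b c \<longrightarrow> ord a c) \<and> (\<forall>a b. ord a b \<or> ord b a) \<and>
     (\<forall>a b c. ord a b \<longrightarrow> ord (a + c) (b + c)) \<and> (\<forall>c. ord 0 c)"

definition C_semigroup :: "('n \<Rightarrow> nat) set \<Rightarrow> ('n \<Rightarrow> nat) set \<Rightarrow> bool" where
  "C_semigroup C S \<longleftrightarrow> S \<subseteq> C \<and> 0 \<in> S \<and> (\<forall>x\<in>S. \<forall>y\<in>S. x + y \<in> S) \<and> finite (C - S)"

definition gaps :: "('n \<Rightarrow> nat) set \<Rightarrow> ('n \<Rightarrow> nat) set \<Rightarrow> ('n \<Rightarrow> nat) set" where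
  "gaps C S = C - S"

definition frob :: "(('n \<Rightarrow> nat) \<Rightarrow> ('n \<Rightarrow> nat) \<Rightarrow> bool) \<Rightarrow> ('n \<Rightarrow> nat) set \<Rightarrow> ('n \<Rightarrow> nat) set \<Rightarrow> ('n \<Rightarrow> nat)" where
  "frob ord C S = (THE f. f \<in> gaps C S \<and> (\<forall>y\<in>gaps C S. ord y f))"

definition PF :: "('n \<Rightarrow> nat) set \<Rightarrow> ('n \<Rightarrow> nat) set \<Rightarrow> ('n \<Rightarrow> nat) set" where
  "PF C S = {x \<in> gaps C S. \<forall>s \<in> S - {0}. x + s \<in> S}"

text \<open>F(S)/2 is an element h of N^p with h + h = F(S).\<close>
definition C_irreducible :: "(('n \<Rightarrow> nat) \<Rightarrow> ('n \<Rightarrow> nat) \<Rightarrow> bool) \<Rightarrow> ('n \<Rightarrow> nat) set \<Rightarrow> ('n \<Rightarrow> nat) set \<Rightarrow> bool" where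
  "C_irreducible ord C S \<longleftrightarrow>
     PF C S = {frob ord C S} \<or>
     (\<exists>h. h + h = frob ord C S \<and> PF C S = {frob ord C S, h})"

text \<open>x \<le>_S y iff y - x \<in> S (in N^p: y = x + s for some s \<in> S).\<close>
definition leS :: "('n \<Rightarrow> nat) set \<Rightarrow> ('n \<Rightarrow> nat) \<Rightarrow> ('n \<Rightarrow> nat) \<Rightarrow> bool" where
  "leS S x y \<longleftrightarrow> (\<exists>s\<in>S. y = x + s)"

definition FG :: "('n \<Rightarrow> nat) set \<Rightarrow> ('n \<Rightarrow> nat) set \<Rightarrow> ('n \<Rightarrow> nat) set" where
  "FG C S = {x \<in> gaps C S. x + x \<in> S \<and> x + x + x \<in> S}"

definition maxS :: "('n \<Rightarrow> nat) set \<Rightarrow> ('n \<Rightarrow> nat) set \<Rightarrow> ('n \<Rightarrow> nat) set" where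
  "maxS S A = {x \<in> A. \<forall>y\<in>A. leS S x y \<longrightarrow> y = x}"

end

theory Submission
  imports Defs
begin

definition sm :: "nat \<Rightarrow> ('n \<Rightarrow> nat) \<Rightarrow> ('n \<Rightarrow> nat)" where
  "sm k x = (\<lambda>i. k * x i)"

lemma sm_Suc: "sm (Suc k) x = x + sm k x"
  by (auto simp: sm_def plus_fun_def)

lemma sm_0: "sm 0 x = 0" by (auto simp: sm_def zero_fun_def)
lemma sm_1: "sm 1 x = x" by (auto simp: sm_def)
lemma sm_Suc0: "sm (Suc 0) x = x" by (auto simp: sm_def)
lemma sm_add: "sm (a + b) x = sm a x + sm b x"
  by (auto simp: sm_def plus_fun_def algebra_simps)

lemma cone_add:
  assumes "integer_cone C" "x \<in> C" "y \<in> C" shows "x + y \<in> C"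
proof -
  obtain G :: "('a \<Rightarrow> rat) set" where G: "finite G"
    "C = {x. \<exists>l :: ('a \<Rightarrow> rat) \<Rightarrow> rat. (\<forall>g\<in>G. l g \<ge> 0) \<and>
                  (\<forall>i. of_nat (x i) = (\<Sum>g\<in>G. l g * g i))}"
    using assms(1) unfolding integer_cone_def by blast
  from assms(2) G obtain l1 where l1: "\<forall>g\<in>G. l1 g \<ge> 0" "\<forall>i. of_nat (x i) = (\<Sum>g\<in>G. l1 g * g i)" by blast
  from assms(3) G obtain l2 where l2: "\<forall>g\<in>G. l2 g \<ge> 0" "\<forall>i. of_nat (y i) = (\<Sum>g\<in>G. l2 g * g i)" by blast
  have "\<forall>g\<in>G. (\<lambda>g. l1 g + l2 g) g \<ge> 0" using l1 l2 by auto
  moreover have "\<forall>i. of_nat ((x + y) i) = (\<Sum>g\<in>G. (l1 g + l2 g) * g i)"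
    using l1 l2 by (simp add: sum.distrib distrib_right)
  ultimately have "\<exists>l :: ('a \<Rightarrow> rat) \<Rightarrow> rat. (\<forall>g\<in>G. l g \<ge> 0) \<and>
                  (\<forall>i. of_nat ((x + y) i) = (\<Sum>g\<in>G. l g * g i))" by (intro exI[of _ "\<lambda>g. l1 g + l2 g"]) simp
  then show ?thesis using G(2) by simp
qed

lemma nat_fun_zero: "(s::'n::finite \<Rightarrow> nat) \<noteq> 0 \<Longrightarrow> \<exists>i. s i \<noteq> 0"
  by (auto simp: zero_fun_def)

lemma sum_comp_add: "(\<Sum>i\<in>UNIV. ((x::'n::finite \<Rightarrow> nat) + y) i) = (\<Sum>i\<in>UNIV. x i) + (\<Sum>i\<in>UNIV. y i)"
  by (simp add: sum.distrib)

lemma mo_refl: "monomial_order ord \<Longrightarrow> ord a a" unfolding monomial_order_def by blast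
lemma mo_antisym: "monomial_order ord \<Longrightarrow> ord a b \<Longrightarrow> ord b a \<Longrightarrow> a = b"
  unfolding monomial_order_def by blast
lemma mo_trans: "monomial_order ord \<Longrightarrow> ord a b \<Longrightarrow> ord b c \<Longrightarrow> ord a c"
  unfolding monomial_order_def by blast
lemma mo_total: "monomial_order ord \<Longrightarrow> ord a b \<or> ord b a"
  unfolding monomial_order_def by blast
lemma mo_mono: "monomial_order ord \<Longrightarrow> ord a b \<Longrightarrow> ord (a + c) (b + c)"
  unfolding monomial_order_def by blast
lemma mo_zero: "monomial_order ord \<Longrightarrow> ord 0 c"
  unfolding monomial_order_def by blast

lemma ex_ord_max:
  assumes "monomial_order ord" "finite A" "A \<noteq> {}"
  shows "\<exists>f\<in>A. \<forall>y\<in>A. ord y f"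
  using assms(2,3)
proof (induction A rule: finite_ne_induct)
  case (singleton x) then show ?case using mo_refl[OF assms(1)] by auto
next
  case (insert x F)
  then obtain f where f: "f \<in> F" "\<forall>y\<in>F. ord y f" by blast
  show ?case
  proof (cases "ord x f")
    case True then show ?thesis using f by auto
  next
    case False
    then have "ord f x" using mo_total[OF assms(1)] by blast
    then have "\<forall>y\<in>insert x F. ord y x" using f mo_trans[OF assms(1)] mo_refl[OF assms(1)] by blast
    then show ?thesis by blast
  qed
qed

context
  fixes C S :: "('n::finite \<Rightarrow> nat) set"
    and ord :: "('n \<Rightarrow> nat) \<Rightarrow> ('n \<Rightarrow> nat) \<Rightarrow> bool"
  assumes cone: "integer_cone C"
    and mo: "monomial_order ord"
    and cs: "C_semigroup C S"
    and ne: "S \<noteq> C"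
begin

lemma SC: "S \<subseteq> C" and S0: "0 \<in> S" and Sadd: "x \<in> S \<Longrightarrow> y \<in> S \<Longrightarrow> x + y \<in> S"
  and fin: "finite (gaps C S)"
  using cs unfolding C_semigroup_def gaps_def by auto

lemma Cadd: "x \<in> C \<Longrightarrow> y \<in> C \<Longrightarrow> x + y \<in> C" using cone_add[OF cone] by blast

lemma gaps_ne: "gaps C S \<noteq> {}" using SC ne unfolding gaps_def by blast

lemma frob_props: "frob ord C S \<in> gaps C S" "\<forall>y\<in>gaps C S. ord y (frob ord C S)"
proof -
  obtain f where f: "f \<in> gaps C S" "\<forall>y\<in>gaps C S. ord y f"
    using ex_ord_max[OF mo fin gaps_ne] by blast
  have "frob ord C S = f" unfolding frob_def
  proof (rule the_equality)
    show "f \<in> gaps C S \<and> (\<forall>y\<in>gaps C S. ord y f)" using f by blast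
    fix g assume "g \<in> gaps C S \<and> (\<forall>y\<in>gaps C S. ord y g)"
    then show "g = f" using f mo_antisym[OF mo] by blast
  qed
  then show "frob ord C S \<in> gaps C S" "\<forall>y\<in>gaps C S. ord y (frob ord C S)" using f by auto
qed

abbreviation "F \<equiv> frob ord C S"

lemma F_ne0: "F \<noteq> 0" using frob_props(1) S0 unfolding gaps_def by auto

lemma gapC: "x \<in> gaps C S \<Longrightarrow> x \<in> C" "x \<in> gaps C S \<Longrightarrow> x \<notin> S" unfolding gaps_def by auto

lemma above_F: assumes "g \<in> C" "ord F g" "g \<noteq> F" shows "g \<in> S"
proof (rule ccontr)
  assume "g \<notin> S"
  then have "g \<in> gaps C S" using assms unfolding gaps_def by auto
  then have "ord g F" using frob_props by auto
  then show False using assms mo_antisym[OF mo] by blast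
qed

lemma plus_above: assumes "s \<noteq> 0" "x \<in> C" "s \<in> C" shows "ord x (x + s)" "x + s \<noteq> x"
proof -
  have z: "ord 0 s" using mo_zero[OF mo] .
  have "ord (0 + x) (s + x)" by (fact mo_mono[where c=x, OF mo z])
  then show "ord x (x + s)" by (simp add: add.commute)
  show "x + s \<noteq> x"
  proof
    assume "x + s = x"
    then have "x + s = x + 0" by (simp only: add.right_neutral)
    then have "s = 0" by (rule add_left_imp_eq)
    then show False using assms by simp
  qed
qed

lemma F_PF: "F \<in> PF C S"
proof -
  have "F + s \<in> S" if "s \<in> S - {0}" for s
    using above_F[of "F + s"] plus_above[of s F] that gapC frob_props Cadd SC by auto
  then show ?thesis unfolding PF_def using frob_props by auto
qed

lemma F_FG: "F \<in> FG C S"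
proof -
  have FC: "F \<in> C" using gapC frob_props by auto
  have 1: "F + F \<in> S"
    using above_F[of "F + F"] plus_above[of F F] FC F_ne0 Cadd by auto
  have FF0: "F + F \<noteq> 0" using F_ne0 by (auto simp: fun_eq_iff zero_fun_def plus_fun_def)
  have "F + (F + F) \<in> S" using F_PF 1 FF0 unfolding PF_def by blast
  then have "F + F + F \<in> S" by (simp only: add.assoc)
  then show ?thesis unfolding FG_def using 1 frob_props by auto
qed

lemma PF_FG_max: "x \<in> PF C S \<Longrightarrow> x \<in> FG C S \<Longrightarrow> x \<in> maxS S (FG C S)"
  unfolding maxS_def leS_def PF_def FG_def gaps_def by auto

lemma F_max: "F \<in> maxS S (FG C S)" using PF_FG_max F_PF F_FG by auto

lemma max_PF: assumes "x \<in> maxS S (FG C S)" shows "x \<in> PF C S"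
proof -
  have xg: "x \<in> FG C S" and mx: "\<forall>y\<in>FG C S. leS S x y \<longrightarrow> y = x" using assms unfolding maxS_def by auto
  have "x + s \<in> S" if s: "s \<in> S" "s \<noteq> 0" for s
  proof (rule ccontr)
    assume ns: "x + s \<notin> S"
    have xC: "x \<in> C" "x + x \<in> S" "x + x + x \<in> S" using xg unfolding FG_def gaps_def by auto
    have "x + s \<in> C" using Cadd xC s SC by auto
    moreover have "(x + s) + (x + s) = (x + x) + (s + s)" by (simp add: algebra_simps)
    moreover have "(x + s) + (x + s) + (x + s) = (x + x + x) + (s + s + s)" by (simp add: algebra_simps)
    ultimately have "x + s \<in> FG C S" using ns xC s Sadd unfolding FG_def gaps_def by auto
    moreover have "leS S x (x + s)" using s unfolding leS_def by auto
    ultimately have "x + s = x" using mx by auto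
    then show False using s by (metis add_cancel_right_right)
  qed
  then show ?thesis using xg unfolding PF_def FG_def by auto
qed

lemma smC: "x \<in> C \<Longrightarrow> sm k x \<in> C"
  by (induction k) (auto simp: sm_0 sm_Suc S0 SC[THEN subsetD] Cadd)

lemma card1_max: assumes "card (maxS S (FG C S)) = 1" shows "maxS S (FG C S) = {F}"
  using assms F_max by (metis card_1_singletonE singletonD)

lemma keyA:
  assumes c1: "card (maxS S (FG C S)) = 1" and g: "g \<in> gaps C S"
  shows "\<exists>m s. m \<ge> 1 \<and> s \<in> S \<and> F = sm m g + s"
proof -
  have g0: "g \<noteq> 0" using g S0 unfolding gaps_def by auto
  then obtain i where gi: "g i \<noteq> 0" using nat_fun_zero by blast
  define K where "K = {k. 1 \<le> k \<and> sm k g \<in> gaps C S}"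
  have inj: "inj_on (\<lambda>k. sm k g) K"
  proof
    fix a b assume "sm a g = sm b g"
    then have "a * g i = b * g i" unfolding sm_def by meson
    then show "a = b" using gi by simp
  qed
  have "(\<lambda>k. sm k g) ` K \<subseteq> gaps C S" unfolding K_def by auto
  then have finK: "finite K" using inj fin finite_imageD finite_subset by metis
  have "sm 1 g = g" by (rule sm_1)
  then have "1 \<in> K" using g unfolding K_def by simp
  define m where "m = Max K"
  have mK: "m \<in> K" unfolding m_def using finK \<open>1 \<in> K\<close> Max_in by blast
  have mge: "\<And>k. k \<in> K \<Longrightarrow> k \<le> m" unfolding m_def using finK Max_ge by blast
  have gC: "g \<in> C" using g gapC by auto
  have inS: "sm k g \<in> S" if "k > m" for k
  proof -
    have "k \<notin> K" using mge that by force
    then show ?thesis using smC[OF gC, of k] that mK unfolding K_def gaps_def by auto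
  qed
  have m1: "m \<ge> 1" using mK unfolding K_def by auto
  have "sm m g + sm m g = sm (m + m) g" by (simp add: sm_add)
  moreover have "sm m g + sm m g + sm m g = sm (m + m + m) g" by (simp add: sm_add)
  ultimately have mFG: "sm m g \<in> FG C S" using inS[of "m+m"] inS[of "m+m+m"] m1 mK
    unfolding FG_def K_def by auto
  define T where "T = {y\<in>FG C S. leS S (sm m g) y}"
  have finT: "finite T" using fin unfolding T_def FG_def by (auto intro: finite_subset)
  have "sm m g \<in> T" using mFG S0 unfolding T_def leS_def by auto
  define f where "f = (\<lambda>y::'n\<Rightarrow>nat. \<Sum>i\<in>UNIV. y i)"
  have "Max (f ` T) \<in> f ` T" using finT \<open>sm m g \<in> T\<close> by (intro Max_in) auto
  then obtain y0 where y0: "y0 \<in> T" "f y0 = Max (f ` T)" by auto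
  have y0max: "y0 \<in> maxS S (FG C S)"
    unfolding maxS_def
  proof (intro CollectI conjI ballI impI)
    show "y0 \<in> FG C S" using y0 unfolding T_def by auto
    fix z assume z: "z \<in> FG C S" "leS S y0 z"
    then obtain s where s: "s \<in> S" "z = y0 + s" unfolding leS_def by auto
    obtain s' where s': "s' \<in> S" "y0 = sm m g + s'" using y0 unfolding T_def leS_def by auto
    have "z = sm m g + (s' + s)" using s s' by (simp add: add.assoc)
    then have "z \<in> T" using z Sadd s s' unfolding T_def leS_def by auto
    then have "f z \<le> f y0" using y0 finT by auto
    moreover have "f z = f y0 + f s" unfolding f_def s by (simp add: sum.distrib)
    ultimately have "f s = 0" by simp
    then have "s = 0" unfolding f_def by (auto simp: zero_fun_def)
    then show "z = y0" using s by simp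
  qed
  then have "y0 = F" using card1_max[OF c1] by auto
  then obtain s' where "s' \<in> S" "F = sm m g + s'" using y0 unfolding T_def leS_def by auto
  then show ?thesis using m1 by blast
qed

lemma PF_mult: assumes "x \<in> PF C S" "s \<in> S" "s \<noteq> 0" shows "sm (Suc k) x + s \<in> S"
proof (induction k)
  case 0 then show ?case using assms unfolding PF_def by (simp only: sm_Suc0) blast
next
  case (Suc k)
  have ne: "sm (Suc k) x + s \<noteq> 0" using assms(3) by (auto simp: zero_fun_def plus_fun_def fun_eq_iff)
  have "sm (Suc (Suc k)) x + s = x + (sm (Suc k) x + s)" by (simp add: sm_Suc add.assoc)
  moreover have "sm (Suc k) x + s \<in> S - {0}" using Suc ne by blast
  then have "x + (sm (Suc k) x + s) \<in> S" using assms(1) unfolding PF_def by blast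
  ultimately show ?case by (simp only:)
qed

lemma PF_double:
  assumes c1: "card (maxS S (FG C S)) = 1" and x: "x \<in> PF C S" "x \<noteq> F"
  shows "x + x = F"
proof -
  have xg: "x \<in> gaps C S" using x unfolding PF_def by auto
  have x0: "x \<noteq> 0" using xg S0 unfolding gaps_def by auto
  have xC: "x \<in> C" using xg gapC by auto
  have nFG: "x \<notin> FG C S" using PF_FG_max[OF x(1)] card1_max[OF c1] x(2) by auto
  have x2: "x + x \<notin> S"
  proof
    assume "x + x \<in> S"
    moreover have "x + x \<noteq> 0" using x0 by (auto simp: zero_fun_def plus_fun_def fun_eq_iff)
    ultimately have "x + (x + x) \<in> S" using x unfolding PF_def by auto
    then show False using nFG xg \<open>x + x \<in> S\<close> unfolding FG_def by (auto simp: add.assoc)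
  qed
  have FS: "F \<notin> S" using frob_props gapC by auto
  obtain m s where ms: "m \<ge> 1" "s \<in> S" "F = sm m x + s" using keyA[OF c1 xg] by blast
  have s0: "s = 0"
  proof (rule ccontr)
    assume "s \<noteq> 0"
    then have "sm (Suc (m - 1)) x + s \<in> S" using PF_mult[OF x(1) ms(2)] by blast
    then show False using ms FS by simp
  qed
  have Fm: "F = sm m x" using ms s0 by simp
  obtain i where xi: "x i \<noteq> 0" using nat_fun_zero x0 by blast
  consider "m = 1" | "m = 2" | "m \<ge> 3" using ms(1) by linarith
  then show ?thesis
  proof cases
    case 1 then show ?thesis using Fm x(2) by (simp add: sm_Suc0)
  next
    case 2 then show ?thesis using Fm by (simp add: sm_def plus_fun_def fun_eq_iff)
  next
    case 3
    define g where "g = sm (m - 1) x"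
    have gC: "g \<in> C" unfolding g_def using smC xC by auto
    have gS: "g \<notin> S"
    proof
      assume gS: "g \<in> S"
      have "g \<noteq> 0" using xi 3 unfolding g_def by (auto simp: sm_def fun_eq_iff)
      then have "x + g \<in> S" using gS x unfolding PF_def by auto
      moreover have "x + g = F" unfolding g_def Fm using 3
        by (metis Suc_diff_1 le_trans one_le_numeral not_one_le_zero neq0_conv sm_Suc)
      ultimately show False using FS by simp
    qed
    then have gg: "g \<in> gaps C S" using gC unfolding gaps_def by auto
    obtain k t where kt: "k \<ge> 1" "t \<in> S" "F = sm k g + t" using keyA[OF c1 gg] by blast
    have eqi: "m * x i = k * ((m - 1) * x i) + t i"
      using kt(3) Fm unfolding g_def by (metis sm_def plus_fun_apply)
    show ?thesis
    proof (cases "k = 1")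
      case True
      have "t = x"
      proof
        fix j
        have "m * x j = (m - 1) * x j + t j"
          using kt(3) Fm True unfolding g_def by (metis sm_def plus_fun_apply mult_1)
        then show "t j = x j" using 3
          by (metis add_diff_cancel_left' diff_mult_distrib mult_1 add.commute le_add_diff_inverse2 le_trans
              one_le_numeral mult_le_mono1 diff_le_self)
      qed
      then show ?thesis using kt(2) xg gapC by auto
    next
      case False
      then have "k \<ge> 2" using kt(1) by simp
      then have "2 * ((m - 1) * x i) \<le> k * ((m - 1) * x i)" by (rule mult_le_mono1)
      then have "2 * ((m - 1) * x i) \<le> m * x i" using eqi by linarith
      then have "2 * (m - 1) \<le> m" using xi by (metis mult.assoc mult_le_cancel2 neq0_conv)
      then show ?thesis using 3 by linarith
    qed
  qed
qed

lemma half_unique: assumes h: "(x::'n \<Rightarrow> nat) + x = y + y" shows "x = y"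
proof
  fix i
  have "(x + x) i = (y + y) i" using h by (rule arg_cong)
  then show "x i = y i" by simp
qed

lemma main: "C_irreducible ord C S \<longleftrightarrow> card (maxS S (FG C S)) = 1"
proof
  assume irr: "C_irreducible ord C S"
  have "maxS S (FG C S) \<subseteq> {F}"
  proof
    fix x assume xm: "x \<in> maxS S (FG C S)"
    then have "x \<in> PF C S" using max_PF by auto
    moreover have "x + x \<in> S" using xm unfolding maxS_def FG_def by auto
    moreover have "F \<notin> S" using frob_props gapC by auto
    ultimately show "x \<in> {F}" using irr unfolding C_irreducible_def by auto
  qed
  then have "maxS S (FG C S) = {F}" using F_max by auto
  then show "card (maxS S (FG C S)) = 1" by simp
next
  assume c1: "card (maxS S (FG C S)) = 1"
  show "C_irreducible ord C S"
  proof (cases "PF C S = {F}")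
    case True then show ?thesis unfolding C_irreducible_def by simp
  next
    case False
    then obtain h where h: "h \<in> PF C S" "h \<noteq> F" using F_PF by auto
    have hh: "h + h = F" using PF_double[OF c1 h] .
    have "PF C S = {F, h}"
    proof
      show "{F, h} \<subseteq> PF C S" using F_PF h by auto
      show "PF C S \<subseteq> {F, h}"
      proof
        fix y assume "y \<in> PF C S"
        show "y \<in> {F, h}"
        proof (cases "y = F")
          case False
          then have "y + y = h + h" using PF_double[OF c1 \<open>y \<in> PF C S\<close>] hh by simp
          then show ?thesis using half_unique by blast
        qed simp
      qed
    qed
    then show ?thesis using hh unfolding C_irreducible_def by blast
  qed
qed

end

theorem mainTheorem17:
  fixes C S :: "('n::finite \<Rightarrow> nat) set"
    and ord :: "('n \<Rightarrow> nat) \<Rightarrow> ('n \<Rightarrow> nat) \<Rightarrow> bool"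
  assumes "integer_cone C"
    and "monomial_order ord"
    and "C_semigroup C S"
    and "S \<noteq> C"
  shows "C_irreducible ord C S \<longleftrightarrow> card (maxS S (FG C S)) = 1"
  using main[OF assms] .

end
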